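(* Let $\mathbb{K}$ be a field, $k\ge 1$, and let $\mathcal{C}\subseteq\mathbb{K}^{2k}$ be an indecomposable self-dual code. Then $\dim_{\mathbb{K}}(\mathcal{C}^{(2)})=2k-1$.
   Context: A linear code of length $n$ over $\mathbb{K}$ is a $\mathbb{K}$-subspace $\mathcal{C}\subseteq\mathbb{K}^n$; it is self-dual if $\mathcal{C}=\mathcal{C}^\perp$ with respect to the standard bilinear form $\sum_i x_iy_i$. The Schur (componentwise) product of $v,w\in\mathbb{K}^n$ is $v\ast w=(v_1w_1,\dots,v_nw_n)$, and $\mathcal{C}^{(2)}$ is the $\mathbb{K}$-span of all $c\ast c'$, $c,c'\in\mathcal{C}$. Two codes are equivalent if one is obtained from the other by a permutation of coordinates. A code is decomposable if it is equivalent to a direct sum $\mathcal{C}_1\oplus\mathcal{C}_2=\{(c_1,c_2):c_i\in\mathcal{C}_i\}$ of two nontrivial (nonzero, positive-length) codes, and indecomposable otherwise. *)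

theory Defs
  imports Main "HOL.Vector_Spaces" "HOL-Library.Function_Algebras" "HOL-Combinatorics.Permutations"
begin

text \<open>Vectors of \<open>K^n\<close> are represented as functions \<open>nat \<Rightarrow> 'a\<close> vanishing outside \<open>{0..<n}\<close>.\<close>

interpretation fv: vector_space "\<lambda>(c::'a::field) (v::nat \<Rightarrow> 'a). (\<lambda>i. c * v i)"
  by unfold_locales (auto simp: fun_eq_iff algebra_simps)

definition vecs :: "nat \<Rightarrow> (nat \<Rightarrow> 'a::zero) set" where
  "vecs n = {v. \<forall>i\<ge>n. v i = 0}"

definition linear_code :: "nat \<Rightarrow> (nat \<Rightarrow> 'a::field) set \<Rightarrow> bool" where
  "linear_code n C \<longleftrightarrow> C \<subseteq> vecs n \<and> fv.subspace C"

definition bil :: "nat \<Rightarrow> (nat \<Rightarrow> 'a::field) \<Rightarrow> (nat \<Rightarrow> 'a) \<Rightarrow> 'a" where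
  "bil n v w = (\<Sum>i<n. v i * w i)"

definition dual_code :: "nat \<Rightarrow> (nat \<Rightarrow> 'a::field) set \<Rightarrow> (nat \<Rightarrow> 'a) set" where
  "dual_code n C = {w \<in> vecs n. \<forall>c\<in>C. bil n c w = 0}"

definition self_dual :: "nat \<Rightarrow> (nat \<Rightarrow> 'a::field) set \<Rightarrow> bool" where
  "self_dual n C \<longleftrightarrow> linear_code n C \<and> C = dual_code n C"

definition schur :: "(nat \<Rightarrow> 'a::field) \<Rightarrow> (nat \<Rightarrow> 'a) \<Rightarrow> (nat \<Rightarrow> 'a)" where
  "schur v w = (\<lambda>i. v i * w i)"

definition schur_square :: "(nat \<Rightarrow> 'a::field) set \<Rightarrow> (nat \<Rightarrow> 'a) set" where
  "schur_square C = fv.span {schur c c' | c c'. c \<in> C \<and> c' \<in> C}"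

definition perm_code :: "(nat \<Rightarrow> nat) \<Rightarrow> (nat \<Rightarrow> 'a) set \<Rightarrow> (nat \<Rightarrow> 'a) set" where
  "perm_code \<sigma> C = (\<lambda>v. v \<circ> \<sigma>) ` C"

definition direct_sum :: "nat \<Rightarrow> (nat \<Rightarrow> 'a) set \<Rightarrow> (nat \<Rightarrow> 'a) set \<Rightarrow> (nat \<Rightarrow> 'a) set" where
  "direct_sum m C1 C2 = {(\<lambda>i. if i < m then c1 i else c2 (i - m)) | c1 c2. c1 \<in> C1 \<and> c2 \<in> C2}"

definition decomposable :: "nat \<Rightarrow> (nat \<Rightarrow> 'a::field) set \<Rightarrow> bool" where
  "decomposable n C \<longleftrightarrow> (\<exists>\<sigma> m C1 C2. \<sigma> permutes {..<n} \<and> 0 < m \<and> m < n \<and>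
      linear_code m C1 \<and> linear_code (n - m) C2 \<and> C1 \<noteq> {0} \<and> C2 \<noteq> {0} \<and>
      perm_code \<sigma> C = direct_sum m C1 C2)"

definition indecomposable :: "nat \<Rightarrow> (nat \<Rightarrow> 'a::field) set \<Rightarrow> bool" where
  "indecomposable n C \<longleftrightarrow> \<not> decomposable n C"

end

theory Submission
  imports Defs
begin

lemma sum_app: "(sum f A) (x::nat) = (\<Sum>a\<in>A. (f a x :: 'a::field))"
  by (induct A rule: infinite_finite_induct) auto

lemma poly_closed:
  fixes w :: "nat \<Rightarrow> 'a::field"
  assumes sub: "fv.subspace C" and cl: "\<forall>c\<in>C. schur w c \<in> C"
    and fin: "finite T" and aT: "a \<notin> T"
  shows "\<forall>c\<in>C. (\<lambda>l. (\<Prod>b\<in>T. (w l - b) / (a - b)) * c l) \<in> C"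
  using fin aT
proof (induct T rule: finite_induct)
  case empty
  then show ?case by simp
next
  case (insert b T)
  show ?case
  proof
    fix c assume c: "c \<in> C"
    define u where "u = (\<lambda>l. (\<Prod>b\<in>T. (w l - b) / (a - b)) * c l)"
    have u: "u \<in> C" using insert c unfolding u_def by auto
    have "schur w u \<in> C" using cl u by auto
    then have "schur w u - (\<lambda>i. b * u i) \<in> C"
      using fv.subspace_diff[OF sub _ fv.subspace_scale[OF sub u]] by blast
    then have "(\<lambda>i. (1 / (a - b)) * (schur w u - (\<lambda>i. b * u i)) i) \<in> C"
      using fv.subspace_scale[OF sub] by blast
    moreover have "(\<lambda>i. (1 / (a - b)) * (schur w u - (\<lambda>i. b * u i)) i)
        = (\<lambda>l. (\<Prod>b\<in>insert b T. (w l - b) / (a - b)) * c l)"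
      using insert by (auto simp: fun_eq_iff u_def schur_def field_simps)
    ultimately show "(\<lambda>l. (\<Prod>b\<in>insert b T. (w l - b) / (a - b)) * c l) \<in> C" by simp
  qed
qed

lemma proj_closed:
  fixes w :: "nat \<Rightarrow> 'a::field"
  assumes sub: "fv.subspace C" and Cv: "C \<subseteq> vecs n" and cl: "\<forall>c\<in>C. schur w c \<in> C"
    and c: "c \<in> C"
  shows "(\<lambda>l. if l < n \<and> w l = a then c l else 0) \<in> C"
proof -
  define T where "T = w ` {..<n} - {a}"
  have "(\<lambda>l. (\<Prod>b\<in>T. (w l - b) / (a - b)) * c l) \<in> C"
    using poly_closed[OF sub cl, of T a] c unfolding T_def by auto
  moreover have "(\<lambda>l. (\<Prod>b\<in>T. (w l - b) / (a - b)) * c l) = (\<lambda>l. if l < n \<and> w l = a then c l else 0)"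
  proof
    fix l
    show "(\<Prod>b\<in>T. (w l - b) / (a - b)) * c l = (if l < n \<and> w l = a then c l else 0)"
    proof (cases "l < n")
      case True
      show ?thesis
      proof (cases "w l = a")
        case True
        have "(\<Prod>b\<in>T. (w l - b) / (a - b)) = 1"
          by (rule prod.neutral) (auto simp: T_def True)
        then show ?thesis using \<open>l < n\<close> True by simp
      next
        case False
        have "w l \<in> T" using \<open>l < n\<close> False by (auto simp: T_def)
        moreover have "finite T" by (simp add: T_def)
        ultimately have "(\<Prod>b\<in>T. (w l - b) / (a - b)) = 0"
          by (intro prod_zero[of T]) auto
        then show ?thesis using False by simp
      qed
    next
      case False
      then have "c l = 0" using Cv c by (auto simp: vecs_def)
      then show ?thesis by simp
    qed
  qed
  ultimately show ?thesis by simp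
qed


lemma self_dual_facts:
  assumes "self_dual n C"
  shows "fv.subspace C" "C \<subseteq> vecs n" "C = dual_code n C"
  using assms by (auto simp: self_dual_def linear_code_def)

lemma unit_support:
  fixes C :: "(nat \<Rightarrow> 'a::field) set"
  assumes sd: "self_dual n C" and i: "i < n"
  shows "\<exists>c\<in>C. c i \<noteq> 0"
proof (rule ccontr)
  assume H: "\<not> (\<exists>c\<in>C. c i \<noteq> 0)"
  define e :: "nat \<Rightarrow> 'a" where "e = (\<lambda>l. if l = i then 1 else 0)"
  have bil_e: "bil n v e = v i" for v
    using i by (simp add: bil_def e_def if_distrib cong: if_cong)
  have "e \<in> vecs n" using i by (auto simp: vecs_def e_def)
  then have "e \<in> dual_code n C" using H bil_e by (auto simp: dual_code_def)
  then have eC: "e \<in> C" using self_dual_facts(3)[OF sd, symmetric] by simp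
  with \<open>e \<in> dual_code n C\<close> have "bil n e e = 0" by (auto simp: dual_code_def)
  then show False using bil_e[of e] by (simp add: e_def)
qed

lemma subspace_reindex:
  fixes C :: "(nat \<Rightarrow> 'a::field) set"
  assumes "fv.subspace C"
  shows "fv.subspace ((\<lambda>c i. if p i then c (h i) else 0) ` C)"
proof (rule fv.subspaceI)
  show "0 \<in> (\<lambda>c i. if p i then c (h i) else 0) ` C"
    using fv.subspace_0[OF assms] by (auto intro!: image_eqI[where x=0] simp: fun_eq_iff)
next
  fix x y assume "x \<in> (\<lambda>c i. if p i then c (h i) else 0) ` C" "y \<in> (\<lambda>c i. if p i then c (h i) else 0) ` C"
  then obtain c c' where "c \<in> C" "c' \<in> C" "x = (\<lambda>i. if p i then c (h i) else 0)" "y = (\<lambda>i. if p i then c' (h i) else 0)"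
    by auto
  then show "x + y \<in> (\<lambda>c i. if p i then c (h i) else 0) ` C"
    using fv.subspace_add[OF assms] by (auto intro!: image_eqI[where x="c + c'"] simp: fun_eq_iff)
next
  fix a x assume "x \<in> (\<lambda>c i. if p i then c (h i) else 0) ` C"
  then obtain c where "c \<in> C" "x = (\<lambda>i. if p i then c (h i) else 0)" by auto
  then show "(\<lambda>i. a * x i) \<in> (\<lambda>c i. if p i then c (h i) else 0) ` C"
    using fv.subspace_scale[OF assms] by (auto intro!: image_eqI[where x="\<lambda>i. a * c i"] simp: fun_eq_iff)
qed


lemma decomp:
  fixes C :: "(nat \<Rightarrow> 'a::field) set"
  assumes sd: "self_dual n C" and Sn: "S \<subseteq> {..<n}" and Sne: "S \<noteq> {}" and Sp: "S \<noteq> {..<n}"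
    and Pcl: "\<forall>c\<in>C. (\<lambda>l. if l \<in> S then c l else 0) \<in> C"
  shows "decomposable n C"
proof -
  note sub = self_dual_facts(1)[OF sd] and Cv = self_dual_facts(2)[OF sd]
  define R where "R = {..<n} - S"
  define m where "m = card S"
  have finS: "finite S" using Sn finite_subset by blast
  have cardR: "card R = n - m" unfolding R_def m_def using Sn finS by (simp add: card_Diff_subset)
  have mpos: "0 < m" using finS Sne by (simp add: m_def card_gt_0_iff)
  have mn: "m < n" unfolding m_def using Sn Sp by (metis card_lessThan finite_lessThan psubsetI psubset_card_mono)
  obtain f where f: "bij_betw f {..<m} S"
    using finite_same_card_bij[of "{..<m}" S] finS by (auto simp: m_def)
  obtain g where g: "bij_betw g {m..<n} R"
    using finite_same_card_bij[of "{m..<n}" R] cardR by (auto simp: R_def)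
  define \<sigma> where "\<sigma> = (\<lambda>i. if i < m then f i else if i < n then g i else i)"
  have b1: "bij_betw \<sigma> {..<m} S"
    using f by (rule bij_betw_cong[THEN iffD1, rotated]) (auto simp: \<sigma>_def)
  have b2: "bij_betw \<sigma> {m..<n} R"
    using g by (rule bij_betw_cong[THEN iffD1, rotated]) (auto simp: \<sigma>_def)
  have "bij_betw \<sigma> ({..<m} \<union> {m..<n}) (S \<union> R)"
    by (rule bij_betw_combine[OF b1 b2]) (auto simp: R_def)
  moreover have "{..<m} \<union> {m..<n} = {..<n}" using mn by auto
  moreover have "S \<union> R = {..<n}" using Sn by (auto simp: R_def)
  ultimately have bij: "bij_betw \<sigma> {..<n} {..<n}" by simp
  have perm: "\<sigma> permutes {..<n}"
    by (rule bij_imp_permutes[OF bij]) (use mn in \<open>auto simp: \<sigma>_def\<close>)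
  have s1: "i < m \<Longrightarrow> \<sigma> i \<in> S" for i using b1 by (auto simp: bij_betw_def)
  have s2: "m \<le> i \<Longrightarrow> i < n \<Longrightarrow> \<sigma> i \<in> R" for i using b2 by (auto simp: bij_betw_def)
  have s3: "n \<le> i \<Longrightarrow> \<sigma> i = i" for i using mn by (auto simp: \<sigma>_def)
  have S1: "l \<in> S \<Longrightarrow> \<exists>i<m. \<sigma> i = l" for l using b1 by (auto simp: bij_betw_def)
  have S2: "l \<in> R \<Longrightarrow> \<exists>i. m \<le> i \<and> i < n \<and> \<sigma> i = l" for l using b2 by (force simp: bij_betw_def)
  define C1 where "C1 = (\<lambda>c i. if i < m then c (\<sigma> i) else 0) ` C"
  define C2 where "C2 = (\<lambda>c i. if i < n - m then c (\<sigma> (i + m)) else 0) ` C"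
  have lc1: "linear_code m C1"
    unfolding linear_code_def C1_def using subspace_reindex[OF sub]
    by (auto simp: vecs_def)
  have lc2: "linear_code (n - m) C2"
    unfolding linear_code_def C2_def using subspace_reindex[OF sub, of "\<lambda>i. i < n - m" "\<lambda>i. \<sigma> (i + m)"]
    by (auto simp: vecs_def)
  have C1ne: "C1 \<noteq> {0}"
  proof -
    obtain l where "l \<in> S" using Sne by auto
    then obtain i where i: "i < m" "\<sigma> i = l" using S1 by auto
    obtain c where c: "c \<in> C" "c l \<noteq> 0" using unit_support[OF sd, of l] \<open>l \<in> S\<close> Sn by auto
    have "(\<lambda>i. if i < m then c (\<sigma> i) else 0) \<in> C1" using c by (auto simp: C1_def)
    moreover have "(\<lambda>i. if i < m then c (\<sigma> i) else 0) \<noteq> 0"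
      using i c by (auto simp: fun_eq_iff intro!: exI[of _ i])
    ultimately show ?thesis by auto
  qed
  have C2ne: "C2 \<noteq> {0}"
  proof -
    obtain l where "l \<in> R" using Sp Sn by (auto simp: R_def)
    then obtain i where i: "m \<le> i" "i < n" "\<sigma> i = l" using S2 by blast
    obtain c where c: "c \<in> C" "c l \<noteq> 0" using unit_support[OF sd, of l] \<open>l \<in> R\<close> by (auto simp: R_def)
    have "(\<lambda>i. if i < n - m then c (\<sigma> (i + m)) else 0) \<in> C2" using c by (auto simp: C2_def)
    moreover have "(\<lambda>i. if i < n - m then c (\<sigma> (i + m)) else 0) \<noteq> 0"
      using i c by (auto simp: fun_eq_iff intro!: exI[of _ "i - m"])
    ultimately show ?thesis by auto
  qed
  have eq: "perm_code \<sigma> C = direct_sum m C1 C2"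
  proof
    show "perm_code \<sigma> C \<subseteq> direct_sum m C1 C2"
    proof
      fix v assume "v \<in> perm_code \<sigma> C"
      then obtain c where c: "c \<in> C" "v = c \<circ> \<sigma>" by (auto simp: perm_code_def)
      have cz: "n \<le> l \<Longrightarrow> c l = 0" for l using c Cv by (auto simp: vecs_def)
      have "v = (\<lambda>i. if i < m then (\<lambda>i. if i < m then c (\<sigma> i) else 0) i
                  else (\<lambda>i. if i < n - m then c (\<sigma> (i + m)) else 0) (i - m))"
        using c(2) cz s3 by (auto simp: fun_eq_iff)
      moreover have "(\<lambda>i. if i < m then c (\<sigma> i) else 0) \<in> C1" using c by (auto simp: C1_def)
      moreover have "(\<lambda>i. if i < n - m then c (\<sigma> (i + m)) else 0) \<in> C2" using c by (auto simp: C2_def)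
      ultimately show "v \<in> direct_sum m C1 C2" unfolding direct_sum_def
        by (intro CollectI exI[of _ "\<lambda>i. if i < m then c (\<sigma> i) else 0"]
             exI[of _ "\<lambda>i. if i < n - m then c (\<sigma> (i + m)) else 0"]) simp
    qed
  next
    show "direct_sum m C1 C2 \<subseteq> perm_code \<sigma> C"
    proof
      fix v assume "v \<in> direct_sum m C1 C2"
      then obtain c c' where cc: "c \<in> C" "c' \<in> C"
        and v: "v = (\<lambda>i. if i < m then (\<lambda>i. if i < m then c (\<sigma> i) else 0) i
                  else (\<lambda>i. if i < n - m then c' (\<sigma> (i + m)) else 0) (i - m))"
        unfolding direct_sum_def C1_def C2_def by blast
      define d where "d = (\<lambda>l. if l \<in> S then c l else 0) + (c' - (\<lambda>l. if l \<in> S then c' l else 0))"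
      have dC: "d \<in> C" unfolding d_def
        using Pcl cc fv.subspace_add[OF sub] fv.subspace_diff[OF sub] by auto
      have cz: "n \<le> l \<Longrightarrow> c' l = 0" for l using cc Cv by (auto simp: vecs_def)
      have "v = d \<circ> \<sigma>"
      proof
        fix i
        show "v i = (d \<circ> \<sigma>) i"
        proof (cases "i < m")
          case True then show ?thesis using s1[OF True] by (simp add: v d_def)
        next
          case False
          show ?thesis
          proof (cases "i < n")
            case True
            have "\<sigma> i \<notin> S" using s2[of i] True False by (auto simp: R_def)
            moreover have "i - m < n - m" "i - m + m = i" using True False by auto
            ultimately show ?thesis using True False by (simp add: v d_def)
          next
            case F2: False
            then have "\<sigma> i \<notin> S" using s3 Sn by auto
            then show ?thesis using False F2 s3 cz by (simp add: v d_def)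
          qed
        qed
      qed
      then show "v \<in> perm_code \<sigma> C" using dC by (auto simp: perm_code_def)
    qed
  qed
  show ?thesis unfolding decomposable_def
    using perm mpos mn lc1 lc2 C1ne C2ne eq by blast
qed


lemma stab_const:
  fixes C :: "(nat \<Rightarrow> 'a::field) set"
  assumes sd: "self_dual n C" and ind: "indecomposable n C"
    and cl: "\<forall>c\<in>C. schur w c \<in> C" and i: "i < n" and j: "j < n"
  shows "w i = w j"
proof (rule ccontr)
  assume ne: "w i \<noteq> w j"
  define S where "S = {l. l < n \<and> w l = w i}"
  have "\<forall>c\<in>C. (\<lambda>l. if l \<in> S then c l else 0) \<in> C"
  proof
    fix c assume c: "c \<in> C"
    have "(\<lambda>l. if l < n \<and> w l = w i then c l else 0) \<in> C"
      by (rule proj_closed[OF self_dual_facts(1,2)[OF sd] cl c])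
    moreover have "(\<lambda>l. if l \<in> S then c l else 0) = (\<lambda>l. if l < n \<and> w l = w i then c l else 0)"
      by (simp add: S_def)
    ultimately show "(\<lambda>l. if l \<in> S then c l else 0) \<in> C" by simp
  qed
  moreover have "S \<subseteq> {..<n}" by (auto simp: S_def)
  moreover have "i \<in> S" using i by (simp add: S_def)
  then have "S \<noteq> {}" by blast
  moreover have "j \<notin> S" using ne by (simp add: S_def)
  then have "S \<noteq> {..<n}" using j by blast
  ultimately have "decomposable n C" using decomp[OF sd] by blast
  then show False using ind by (simp add: indecomposable_def)
qed

lemma wstab_lemma:
  fixes C :: "(nat \<Rightarrow> 'a::field) set" and g :: "(nat \<Rightarrow> 'a) \<Rightarrow> 'a"
  assumes sd: "self_dual n C" and rep: "\<And>v. v \<in> vecs n \<Longrightarrow> g v = (\<Sum>l<n. v l * w l)"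
    and gz: "\<And>c c'. c \<in> C \<Longrightarrow> c' \<in> C \<Longrightarrow> g (schur c' c) = 0"
  shows "\<forall>c\<in>C. schur w c \<in> C"
proof
  fix c assume c: "c \<in> C"
  have Cv: "C \<subseteq> vecs n" and dual: "dual_code n C = C"
    using sd by (auto simp: self_dual_def linear_code_def)
  have cz: "\<forall>i\<ge>n. c i = 0" using c Cv by (auto simp: vecs_def)
  have sv: "schur v c \<in> vecs n" for v
    unfolding vecs_def schur_def using cz by simp
  have "\<forall>c'\<in>C. bil n c' (schur w c) = 0"
  proof
    fix c' assume c': "c' \<in> C"
    have "g (schur c' c) = 0" using gz[OF c c'] .
    moreover have "g (schur c' c) = (\<Sum>l<n. schur c' c l * w l)" using rep[OF sv] .
    moreover have "bil n c' (schur w c) = (\<Sum>l<n. schur c' c l * w l)"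
      unfolding bil_def schur_def by (rule sum.cong) (simp_all add: mult_ac)
    ultimately show "bil n c' (schur w c) = 0" by simp
  qed
  then have "schur w c \<in> dual_code n C" using sv[of w] by (simp add: dual_code_def)
  then show "schur w c \<in> C" using dual by simp
qed

lemma final_calc:
  fixes y w :: "nat \<Rightarrow> 'a::field"
  assumes n2: "n \<ge> 2" and j: "j < n - 1"
    and y: "y = (\<lambda>l. if l = j then 1 else if l = n - 1 then -1 else 0)"
    and wc: "\<And>i. i < n \<Longrightarrow> w i = w (n - 1)"
  shows "(\<Sum>l<n. y l * w l) = 0"
proof -
  obtain m where m: "n = Suc m" using n2 by (cases n) auto
  have jm: "j < m" using j m by simp
  have "(\<Sum>l<n. y l * w l) = (\<Sum>l<n. y l * w m)"
    by (rule sum.cong[OF refl]) (metis lessThan_iff wc m diff_Suc_1)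
  also have "\<dots> = (\<Sum>l<n. y l) * w m" by (simp add: sum_distrib_right)
  also have "(\<Sum>l<n. y l) = (\<Sum>l<m. y l) + y m" by (simp add: m)
  also have "(\<Sum>l<m. y l) = (\<Sum>l<m. if l = j then 1 else 0)"
    by (rule sum.cong[OF refl]) (simp add: y m)
  also have "\<dots> = 1" using jm by simp
  also have "y m = -1" using jm by (simp add: y m)
  finally show ?thesis by simp
qed

interpretation fa: vector_space "(*) :: 'a::field \<Rightarrow> 'a \<Rightarrow> 'a"
  by unfold_locales (auto simp: algebra_simps)

interpretation fp: vector_space_pair "\<lambda>(c::'a::field) (v::nat \<Rightarrow> 'a). (\<lambda>i. c * v i)" "(*) :: 'a \<Rightarrow> 'a \<Rightarrow> 'a"
  by unfold_locales

lemma vec_expand: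
  fixes v :: "nat \<Rightarrow> 'a::field"
  assumes "v \<in> vecs n"
  shows "v = (\<Sum>l<n. (\<lambda>i. v l * (if i = l then 1 else 0)))"
proof
  fix x
  show "v x = (\<Sum>l<n. (\<lambda>i. v l * (if i = l then 1 else 0))) x"
  proof -
    have "(\<Sum>l<n. (\<lambda>i. v l * (if i = l then 1 else 0))) x = (\<Sum>l<n. v l * (if x = l then 1 else 0))"
      by (rule sum_app)
    also have "\<dots> = (\<Sum>l<n. if x = l then v l else 0)"
      by (rule sum.cong) auto
    also have "\<dots> = (if x < n then v x else 0)"
      by (simp add: sum.delta)
    also have "\<dots> = v x" using assms by (auto simp: vecs_def)
    finally show ?thesis by simp
  qed
qed

lemma linear_rep:
  fixes g :: "(nat \<Rightarrow> 'a::field) \<Rightarrow> 'a"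
  assumes lin: "Vector_Spaces.linear (\<lambda>(c::'a) (v::nat \<Rightarrow> 'a). (\<lambda>i. c * v i)) (*) g" and v: "v \<in> vecs n"
  shows "g v = (\<Sum>l<n. v l * g (\<lambda>i. if i = l then 1 else 0))"
proof -
  have mh: "module_hom (\<lambda>(c::'a) (v::nat \<Rightarrow> 'a). (\<lambda>i. c * v i)) (*) g"
    using lin unfolding linear_def by blast
  have "g v = g (\<Sum>l<n. (\<lambda>i. v l * (if i = l then 1 else 0)))"
    using vec_expand[OF v] by simp
  also have "\<dots> = (\<Sum>l<n. g (\<lambda>i. v l * (if i = l then 1 else 0)))"
    by (rule module_hom.sum[OF mh])
  also have "\<dots> = (\<Sum>l<n. v l * g (\<lambda>i. if i = l then 1 else 0))"
    by (rule sum.cong) (simp_all add: module_hom.scale[OF mh])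
  finally show ?thesis .
qed


theorem mainTheorem2:
  fixes C :: "(nat \<Rightarrow> 'a::field) set" and k :: nat
  assumes "k \<ge> 1"
    and "self_dual (2 * k) C"
    and "indecomposable (2 * k) C"
  shows "fv.dim (schur_square C) = 2 * k - 1"
proof -
  define n where "n = 2 * k"
  have n2: "n \<ge> 2" using assms(1) by (simp add: n_def)
  have sd: "self_dual n C" using assms(2) by (simp add: n_def)
  have ind: "indecomposable n C" using assms(3) by (simp add: n_def)
  note sub = self_dual_facts(1)[OF sd] and Cv = self_dual_facts(2)[OF sd]
    and dual = self_dual_facts(3)[OF sd]
  have orth: "bil n c c' = 0" if "c \<in> C" "c' \<in> C" for c c'
  proof -
    have "c' \<in> dual_code n C" using that(2) dual[symmetric] by simp
    then show ?thesis using that by (auto simp: dual_code_def)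
  qed
  have vz: "v l = 0" if "v \<in> C" "n \<le> l" for v l using that Cv by (auto simp: vecs_def)
  define G where "G = {schur c c' | c c'. c \<in> C \<and> c' \<in> C}"
  define D where "D = fv.span G"
  have SS: "schur_square C = D" by (simp add: schur_square_def D_def G_def)
  define Z where "Z = {v :: nat \<Rightarrow> 'a. v \<in> vecs n \<and> (\<Sum>i<n. v i) = 0}"
  have Zsub: "fv.subspace Z"
  proof (rule fv.subspaceI)
    show "0 \<in> Z" by (simp add: Z_def vecs_def)
  next
    fix u v assume "u \<in> Z" "v \<in> Z"
    then show "u + v \<in> Z" by (simp add: Z_def vecs_def sum.distrib)
  next
    fix a v assume "v \<in> Z"
    then show "(\<lambda>i. a * v i) \<in> Z" by (simp add: Z_def vecs_def sum_distrib_left[symmetric])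
  qed
  have GZ: "G \<subseteq> Z"
  proof
    fix y assume "y \<in> G"
    then obtain c c' where cc: "c \<in> C" "c' \<in> C" "y = schur c c'" by (auto simp: G_def)
    have "y \<in> vecs n" unfolding vecs_def cc(3) schur_def using vz[OF cc(1)] by simp
    moreover have "(\<Sum>i<n. y i) = 0" using orth[OF cc(1,2)] cc(3) by (simp add: bil_def schur_def)
    ultimately show "y \<in> Z" by (simp add: Z_def)
  qed
  have DZ: "D \<subseteq> Z" unfolding D_def by (rule fv.span_minimal[OF GZ Zsub])
  define x where "x j = (\<lambda>l. if l = j then 1 else if l = n - 1 then -1 else (0::'a))" for j
  define B where "B = x ` {..<n-1}"
  have nsplit: "(\<Sum>i<n. f i) = (\<Sum>i<n-1. f i) + f (n - 1)" for f :: "nat \<Rightarrow> 'a"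
  proof -
    obtain m where "n = Suc m" using n2 by (cases n) auto
    then show ?thesis by simp
  qed
  have ZB: "Z \<subseteq> fv.span B"
  proof
    fix v assume vZ: "v \<in> Z"
    have veq: "v = (\<Sum>j<n-1. (\<lambda>l. v j * x j l))"
    proof
      fix l
      have "(\<Sum>j<n-1. (\<lambda>l. v j * x j l)) l = (\<Sum>j<n-1. v j * x j l)" by (rule sum_app)
      also have "\<dots> = v l"
      proof (cases "l < n - 1")
        case True
        have "(\<Sum>j<n-1. v j * x j l) = (\<Sum>j<n-1. if l = j then v j else 0)"
          by (rule sum.cong) (use True in \<open>auto simp: x_def\<close>)
        also have "\<dots> = v l" using True by (simp add: sum.delta)
        finally show ?thesis .
      next
        case False
        show ?thesis
        proof (cases "l = n - 1")
          case True
          have "(\<Sum>j<n-1. v j * x j l) = (\<Sum>j<n-1. - v j)"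
            by (rule sum.cong) (use True in \<open>auto simp: x_def\<close>)
          also have "\<dots> = - (\<Sum>j<n-1. v j)" by (simp add: sum_negf)
          also have "\<dots> = v (n - 1)"
          proof -
            have "(\<Sum>i<n. v i) = 0" using vZ by (simp add: Z_def)
            then have "(\<Sum>j<n-1. v j) + v (n - 1) = 0" by (simp only: nsplit)
            then show ?thesis by (metis add.commute eq_neg_iff_add_eq_0)
          qed
          finally show ?thesis using True by simp
        next
          case F2: False
          then have "n \<le> l" using False by simp
          then have "v l = 0" using vZ by (auto simp: Z_def vecs_def)
          moreover have "(\<Sum>j<n-1. v j * x j l) = 0"
            by (rule sum.neutral) (use False F2 in \<open>auto simp: x_def\<close>)
          ultimately show ?thesis by simp
        qed
      qed
      finally show "v l = (\<Sum>j<n-1. (\<lambda>l. v j * x j l)) l" by simp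
    qed
    have "(\<Sum>j<n-1. (\<lambda>l. v j * x j l)) \<in> fv.span B"
      by (rule fv.span_sum, rule fv.span_scale, rule fv.span_base) (auto simp: B_def)
    then show "v \<in> fv.span B" using veq by simp
  qed
  have xjj: "x j j = 1" if "j < n - 1" for j using that by (simp add: x_def)
  have xij: "x j i = 0" if "i < n - 1" "i \<noteq> j" for i j using that by (simp add: x_def)
  have injx: "inj_on x {..<n-1}"
  proof (rule inj_onI)
    fix i j assume "i \<in> {..<n-1}" "j \<in> {..<n-1}" "x i = x j"
    then have ij: "i < n - 1" "j < n - 1" "x i = x j" by auto
    show "i = j"
    proof (rule ccontr)
      assume "i \<noteq> j"
      then have "x j i = 0" using xij ij by simp
      moreover have "x i i = 1" using xjj ij(1) by simp
      moreover have "x i i = x j i" using ij(3) by simp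
      ultimately show False by simp
    qed
  qed
  have finB: "finite B" by (simp add: B_def)
  have cardB: "card B = n - 1" using injx by (simp add: B_def card_image)
  have indB: "fv.independent B"
  proof (rule fv.independent_if_scalars_zero[OF finB])
    fix f y assume H: "(\<Sum>y\<in>B. (\<lambda>i. f y * y i)) = 0" and y: "y \<in> B"
    then obtain j0 where j0: "j0 < n - 1" "y = x j0" by (auto simp: B_def)
    have "0 = (\<Sum>y\<in>B. (\<lambda>i. f y * y i)) j0" using H by simp
    also have "\<dots> = (\<Sum>y\<in>B. f y * y j0)" by (rule sum_app)
    also have "\<dots> = (\<Sum>j<n-1. f (x j) * x j j0)"
      unfolding B_def by (rule sum.reindex[OF injx, unfolded comp_def])
    also have "\<dots> = (\<Sum>j<n-1. if j = j0 then f (x j) else 0)"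
      by (rule sum.cong) (use j0 xjj xij in auto)
    also have "\<dots> = f y" using j0 by simp
    finally show "f y = 0" by simp
  qed
  have key: "B \<subseteq> D"
  proof
    fix y assume "y \<in> B"
    then obtain j where j: "j < n - 1" "y = x j" by (auto simp: B_def)
    show "y \<in> D"
    proof (rule ccontr)
      assume xD: "y \<notin> D"
      obtain Bd where Bd: "Bd \<subseteq> D" "fv.independent Bd" "D \<subseteq> fv.span Bd" "card Bd = fv.dim D"
        by (rule fv.basis_exists)
      have "fv.span Bd \<subseteq> D" unfolding D_def
        by (rule fv.span_minimal) (use Bd(1) in \<open>auto simp: D_def\<close>)
      then have "y \<notin> fv.span Bd" using xD by blast
      then have ind2: "fv.independent (insert y Bd)" using fv.independent_insertI Bd(2) by blast
      obtain g where lin: "Vector_Spaces.linear (\<lambda>(c::'a) (v::nat \<Rightarrow> 'a). (\<lambda>i. c * v i)) (*) g"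
        and gv: "\<forall>z\<in>insert y Bd. g z = (if z = y then 1 else 0)"
        using fp.linear_independent_extend[OF ind2, where f="\<lambda>z. if z = y then 1 else (0::'a)"] by blast
      have mh: "module_hom (\<lambda>(c::'a) (v::nat \<Rightarrow> 'a). (\<lambda>i. c * v i)) (*) g"
        using lin by (rule linear.axioms(3))
      have g0: "g z = 0" if "z \<in> Bd" for z using gv that Bd(1) xD by auto
      have gD: "g d = 0" if "d \<in> D" for d
        using module_hom.eq_0_on_span[OF mh, of Bd d] g0 that Bd(3) by blast
      define w where "w l = g (\<lambda>i. if i = l then 1 else 0)" for l
      have rep: "g v = (\<Sum>l<n. v l * w l)" if "v \<in> vecs n" for v
        using linear_rep[OF lin that] by (simp add: w_def)
      have gz: "g (schur c' c) = 0" if "c \<in> C" "c' \<in> C" for c c'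
      proof -
        have "schur c' c \<in> G" unfolding G_def using that by blast
        then have "schur c' c \<in> D" unfolding D_def by (rule fv.span_base)
        then show ?thesis by (rule gD)
      qed
      have wstab: "\<forall>c\<in>C. schur w c \<in> C"
        by (rule wstab_lemma[OF sd rep gz])
      have wc: "w i = w (n - 1)" if "i < n" for i
      proof -
        have "n - 1 < n" using n2 by simp
        then show ?thesis by (rule stab_const[OF sd ind wstab that])
      qed
      have "g y = (if y = y then 1 else 0)" using gv by blast
      then have g1: "g y = 1" by simp
      have yv: "y \<in> vecs n" unfolding vecs_def j(2) x_def using j(1) by auto
      have "g y = (\<Sum>l<n. y l * w l)" by (rule rep[OF yv])
      also have "\<dots> = 0"
        by (rule final_calc[of n j y w, OF n2 j(1) _ wc]) (simp add: j(2) x_def)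
      finally show False using g1 by simp
    qed
  qed
  have "card B = fv.dim D"
    by (rule fv.basis_card_eq_dim[OF key _ indB]) (use DZ ZB in blast)
  then show ?thesis using SS cardB by (simp add: n_def)
qed

end
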